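(* Let $G$ be a regular subsequential method of sequential convergence, and let $f:\mathbb{R}\to\mathbb{R}$ be Abel continuous. Then $f$ is $G$-continuous.
   Context: Let $s$ denote the space of all real sequences and $c$ the space of convergent real sequences. A method of sequential convergence is a linear function $G$ defined on a linear subspace $c_G$ of $s$ with values in $\mathbb{R}$; a sequence $\mathbf{p}$ is $G$-convergent to $\ell$ if $\mathbf{p}\in c_G$ and $G(\mathbf{p})=\ell$. $G$ is regular if every convergent sequence $\mathbf{p}$ belongs to $c_G$ and $G(\mathbf{p})=\lim\mathbf{p}$. $G$ is subsequential if whenever $G(\mathbf{p})=\ell$ there is a subsequence $(p_{n_k})$ of $\mathbf{p}$ with $\lim_k p_{n_k}=\ell$. $f$ is $G$-continuous if for every $G$-convergent sequence $\mathbf{p}=(p_n)$, the sequence $f(\mathbf{p})=(f(p_n))$ is $G$-convergent and $G(f(\mathbf{p}))=f(G(\mathbf{p}))$. A sequence $(p_n)$ is Abel convergent to $\ell$ if $\sum_{k=0}^{\infty}p_k x^k$ converges for every $0\le x<1$ and $\lim_{x\to1^-}(1-x)\sum_{k=0}^\infty p_kx^k=\ell$; $f$ is Abel continuous if $(f(p_n))$ is Abel convergent to $f(\ell)$ whenever $(p_n)$ is Abel convergent to $\ell$. *)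

theory Defs
  imports "HOL-Analysis.Analysis"
begin

text \<open>A method of sequential convergence: a linear functional G defined on a
linear subspace cG of the space of all real sequences (nat \<Rightarrow> real).
The values of G outside cG are irrelevant.\<close>

definition seq_method :: "(nat \<Rightarrow> real) set \<Rightarrow> ((nat \<Rightarrow> real) \<Rightarrow> real) \<Rightarrow> bool" where
  "seq_method cG G \<longleftrightarrow>
     (\<lambda>n. 0) \<in> cG \<and>
     (\<forall>p\<in>cG. \<forall>q\<in>cG. (\<lambda>n. p n + q n) \<in> cG) \<and>
     (\<forall>p\<in>cG. \<forall>c::real. (\<lambda>n. c * p n) \<in> cG) \<and>
     (\<forall>p\<in>cG. \<forall>q\<in>cG. G (\<lambda>n. p n + q n) = G p + G q) \<and>
     (\<forall>p\<in>cG. \<forall>c::real. G (\<lambda>n. c * p n) = c * G p)"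

definition regular_method :: "(nat \<Rightarrow> real) set \<Rightarrow> ((nat \<Rightarrow> real) \<Rightarrow> real) \<Rightarrow> bool" where
  "regular_method cG G \<longleftrightarrow> (\<forall>p. convergent p \<longrightarrow> p \<in> cG \<and> G p = lim p)"

definition subsequential_method :: "(nat \<Rightarrow> real) set \<Rightarrow> ((nat \<Rightarrow> real) \<Rightarrow> real) \<Rightarrow> bool" where
  "subsequential_method cG G \<longleftrightarrow>
     (\<forall>p\<in>cG. \<exists>r. strict_mono r \<and> (\<lambda>k. p (r k)) \<longlonglongrightarrow> G p)"

definition G_continuous :: "(nat \<Rightarrow> real) set \<Rightarrow> ((nat \<Rightarrow> real) \<Rightarrow> real) \<Rightarrow> (real \<Rightarrow> real) \<Rightarrow> bool" where
  "G_continuous cG G f \<longleftrightarrow>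
     (\<forall>p\<in>cG. (\<lambda>n. f (p n)) \<in> cG \<and> G (\<lambda>n. f (p n)) = f (G p))"

definition abel_convergent :: "(nat \<Rightarrow> real) \<Rightarrow> real \<Rightarrow> bool" where
  "abel_convergent p l \<longleftrightarrow>
     (\<forall>x::real. 0 \<le> x \<and> x < 1 \<longrightarrow> summable (\<lambda>k. p k * x ^ k)) \<and>
     ((\<lambda>x. (1 - x) * (\<Sum>k. p k * x ^ k)) \<longlongrightarrow> l) (at_left 1)"

definition abel_continuous :: "(real \<Rightarrow> real) \<Rightarrow> bool" where
  "abel_continuous f \<longleftrightarrow>
     (\<forall>p l. abel_convergent p l \<longrightarrow> abel_convergent (\<lambda>n. f (p n)) (f l))"

end

theory Submission
  imports Defs
begin

lemma abel_unique:
  assumes "abel_convergent p l" "abel_convergent p m" shows "l = m"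
  using assms unfolding abel_convergent_def
  using tendsto_unique trivial_limit_at_left_real by blast

lemma abel_alt: "abel_convergent (\<lambda>k. if even k then a else b) ((a+b)/2)"
proof -
  have S: "(\<lambda>k. (if even k then a else b) * x ^ k) sums ((a+b)/2 * (1/(1-x)) + (a-b)/2 * (1/(1-(-x))))"
    if "0 \<le> x" "x < 1" for x :: real
  proof -
    have "(\<lambda>k. (a+b)/2 * x^k + (a-b)/2 * (-x)^k) sums ((a+b)/2 * (1/(1-x)) + (a-b)/2 * (1/(1-(-x))))"
      by (intro sums_add sums_mult geometric_sums) (use that in auto)
    moreover have "(\<lambda>k. (a+b)/2 * x^k + (a-b)/2 * (-x)^k) = (\<lambda>k. (if even k then a else b) * x ^ k)"
      by (auto simp: fun_eq_iff field_simps)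
    ultimately show ?thesis by simp
  qed
  have "((\<lambda>x::real. (a+b)/2 + (a-b)/2 * ((1-x)/(1+x))) \<longlongrightarrow> (a+b)/2 + (a-b)/2 * ((1-1)/(1+1))) (at_left 1)"
    by (intro tendsto_intros) auto
  then have L: "((\<lambda>x::real. (a+b)/2 + (a-b)/2 * ((1-x)/(1+x))) \<longlongrightarrow> (a+b)/2) (at_left 1)" by simp
  have ev: "eventually (\<lambda>x. (a+b)/2 + (a-b)/2 * ((1-x)/(1+x)) = (1 - x) * (\<Sum>k. (if even k then a else b) * x ^ k)) (at_left (1::real))"
    using eventually_at_left_real[OF zero_less_one]
  proof (rule eventually_mono)
    fix x :: real assume x: "x \<in> {0<..<1}"
    then have E: "(\<Sum>k. (if even k then a else b) * x ^ k) = (a+b)/2 * (1/(1-x)) + (a-b)/2 * (1/(1-(-x)))"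
      using sums_unique[OF S[of x], symmetric] x by auto
    then show "(a+b)/2 + (a-b)/2 * ((1-x)/(1+x)) = (1 - x) * (\<Sum>k. (if even k then a else b) * x ^ k)"
    proof -
      have d: "1 - x \<noteq> 0" "1 + x \<noteq> 0" "2 - 2*x \<noteq> 0" "2 + 2*x \<noteq> 0" "4 - x*(x*4) \<noteq> 0" using x mult_strict_mono[of x 1 x 1] by (auto simp: algebra_simps)
      show ?thesis unfolding E using d by (simp add: field_simps)
    qed
  qed
  show ?thesis unfolding abel_convergent_def
  proof (intro conjI allI impI)
    fix x :: real assume "0 \<le> x \<and> x < 1"
    then show "summable (\<lambda>k. (if even k then a else b) * x ^ k)"
      using S sums_summable by blast
  next
    show "((\<lambda>x. (1 - x) * (\<Sum>k. (if even k then a else b) * x ^ k)) \<longlongrightarrow> (a + b) / 2) (at_left 1)"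
      using L ev by (rule Lim_transform_eventually)
  qed
qed


lemma abel_null:
  fixes e :: "nat \<Rightarrow> real"
  assumes e: "e \<longlonglongrightarrow> 0"
  shows "abel_convergent e 0"
proof -
  have "Bseq e" using e by (intro convergent_imp_Bseq) (auto simp: convergent_def)
  then obtain B where B: "B > 0" "\<And>k. \<bar>e k\<bar> \<le> B"
    by (metis BseqE real_norm_def)
  have sa: "summable (\<lambda>k. \<bar>e k * x ^ k\<bar>)" if "0 \<le> x" "x < 1" for x :: real
  proof (rule summable_comparison_test'[where N=0])
    show "summable (\<lambda>k. B * x ^ k)"
      using that by (intro summable_mult summable_geometric) auto
    fix n :: nat
    show "norm \<bar>e n * x ^ n\<bar> \<le> B * x ^ n"
      using B(2)[of n] that by (auto simp: abs_mult intro!: mult_right_mono)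
  qed
  have s: "summable (\<lambda>k. e k * x ^ k)" if "0 \<le> x" "x < 1" for x :: real
    by (rule summable_rabs_cancel[OF sa[OF that]])
  have lim: "((\<lambda>x. (1 - x) * (\<Sum>k. e k * x ^ k)) \<longlongrightarrow> 0) (at_left 1)"
  proof (rule tendstoI)
    fix \<epsilon> :: real assume \<epsilon>: "\<epsilon> > 0"
    obtain N where N: "\<And>k. k \<ge> N \<Longrightarrow> \<bar>e k\<bar> < \<epsilon>/2"
    proof -
      have "\<epsilon>/2 > 0" using \<epsilon> by simp
      then obtain N where "\<forall>n\<ge>N. norm (e n - 0) < \<epsilon>/2" using e unfolding LIMSEQ_iff by blast
      then show ?thesis using that by auto
    qed
    define C where "C = B * real N"
    have C: "C \<ge> 0" using B by (simp add: C_def)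
    define d where "d = \<epsilon> / (2 * (C + 1))"
    have d: "d > 0" "d * C < \<epsilon>/2"
      using \<epsilon> C by (auto simp: d_def field_simps)
    have "eventually (\<lambda>x. x \<in> {max 0 (1 - d)<..<1}) (at_left (1::real))"
      by (rule eventually_at_left_real) (use d in auto)
    then show "eventually (\<lambda>x. dist ((1 - x) * (\<Sum>k. e k * x ^ k)) 0 < \<epsilon>) (at_left 1)"
    proof (rule eventually_mono)
      fix x :: real assume x: "x \<in> {max 0 (1 - d)<..<1}"
      then have x0: "0 \<le> x" "x < 1" "1 - x < d" by auto
      have g1: "(\<lambda>k. \<epsilon>/2 * x ^ k) sums (\<epsilon>/2 * (1 / (1 - x)))"
        using x0 by (intro sums_mult geometric_sums) auto
      have g2: "(\<lambda>k. if k \<in> {..<N} then B else 0) sums (\<Sum>k\<in>{..<N}. B)"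
        by (rule sums_If_finite_set) simp
      have g: "(\<lambda>k. \<epsilon>/2 * x ^ k + (if k \<in> {..<N} then B else 0)) sums (\<epsilon>/2 * (1 / (1 - x)) + C)"
        using sums_add[OF g1 g2] by (simp add: C_def mult.commute)
      have le: "(\<Sum>k. \<bar>e k * x ^ k\<bar>) \<le> \<epsilon>/2 * (1 / (1 - x)) + C"
      proof (rule sums_le[OF _ summable_sums[OF sa[OF x0(1,2)]] g])
        fix k
        show "\<bar>e k * x ^ k\<bar> \<le> \<epsilon>/2 * x ^ k + (if k \<in> {..<N} then B else 0)"
        proof (cases "k < N")
          case True
          have "\<bar>e k * x ^ k\<bar> \<le> B * 1"
            unfolding abs_mult using B(2)[of k] x0 by (intro mult_mono) (auto intro: power_le_one)
          moreover have "0 \<le> \<epsilon>/2 * x ^ k" using \<epsilon> x0 by simp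
          ultimately show ?thesis using True by simp
        next
          case False
          have "\<bar>e k * x ^ k\<bar> \<le> \<epsilon>/2 * x ^ k"
            unfolding abs_mult using N[of k] False x0 mult_right_mono[of "\<bar>e k\<bar>" "\<epsilon>/2" "x^k"] by simp
          then show ?thesis using False by simp
        qed
      qed
      have "\<bar>(1 - x) * (\<Sum>k. e k * x ^ k)\<bar> \<le> (1 - x) * (\<Sum>k. \<bar>e k * x ^ k\<bar>)"
      proof -
        have "\<bar>(1 - x) * (\<Sum>k. e k * x ^ k)\<bar> = (1 - x) * \<bar>\<Sum>k. e k * x ^ k\<bar>"
          using x0 by (simp add: abs_mult)
        then show ?thesis using x0 summable_rabs[OF sa[OF x0(1,2)]] by (simp add: mult_left_mono)
      qed
      also have "\<dots> \<le> (1 - x) * (\<epsilon>/2 * (1 / (1 - x)) + C)"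
        using le x0 by (intro mult_left_mono) auto
      also have "\<dots> = \<epsilon>/2 + (1 - x) * C"
        using x0 by (simp add: field_simps)
      also have "\<dots> \<le> \<epsilon>/2 + d * C"
        using x0 C by (intro add_left_mono mult_right_mono) auto
      also have "\<dots> < \<epsilon>" using d by simp
      finally show "dist ((1 - x) * (\<Sum>k. e k * x ^ k)) 0 < \<epsilon>"
        by (simp add: dist_real_def)
    qed
  qed
  show ?thesis unfolding abel_convergent_def using s lim by blast
qed

lemma abel_regular:
  fixes p :: "nat \<Rightarrow> real"
  assumes p: "p \<longlonglongrightarrow> l"
  shows "abel_convergent p l"
proof -
  define e where "e k = p k - l" for k
  have "e \<longlonglongrightarrow> l - l" unfolding e_def by (intro tendsto_intros p)
  then have A: "abel_convergent e 0" by (intro abel_null) simp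
  have S: "(\<lambda>k. p k * x ^ k) sums (l * (1 / (1 - x)) + (\<Sum>k. e k * x ^ k))"
    if "0 \<le> x" "x < 1" for x :: real
  proof -
    have "(\<lambda>k. l * x ^ k + e k * x ^ k) sums (l * (1 / (1 - x)) + (\<Sum>k. e k * x ^ k))"
      using that A unfolding abel_convergent_def
      by (intro sums_add sums_mult geometric_sums summable_sums) auto
    then show ?thesis by (simp add: e_def algebra_simps)
  qed
  have L: "((\<lambda>x. l + (1 - x) * (\<Sum>k. e k * x ^ k)) \<longlongrightarrow> l + 0) (at_left 1)"
    using A unfolding abel_convergent_def by (intro tendsto_intros) auto
  have ev: "eventually (\<lambda>x. l + (1 - x) * (\<Sum>k. e k * x ^ k) = (1 - x) * (\<Sum>k. p k * x ^ k)) (at_left (1::real))"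
    using eventually_at_left_real[OF zero_less_one]
  proof (rule eventually_mono)
    fix x :: real assume x: "x \<in> {0<..<1}"
    then show "l + (1 - x) * (\<Sum>k. e k * x ^ k) = (1 - x) * (\<Sum>k. p k * x ^ k)"
      using sums_unique[OF S[of x], symmetric] by (simp add: field_simps)
  qed
  show ?thesis unfolding abel_convergent_def
  proof (intro conjI allI impI)
    fix x :: real assume "0 \<le> x \<and> x < 1"
    then show "summable (\<lambda>k. p k * x ^ k)" using S sums_summable by blast
  next
    show "((\<lambda>x. (1 - x) * (\<Sum>k. p k * x ^ k)) \<longlongrightarrow> l) (at_left 1)"
      using L ev by (simp add: Lim_transform_eventually)
  qed
qed


lemma abel_jensen:
  assumes f: "abel_continuous f"
  shows "f ((a + b) / 2) = (f a + f b) / 2"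
proof -
  have H: "abel_convergent (\<lambda>n. f (if even n then a else b)) (f ((a + b) / 2))"
    using f abel_alt[of a b] unfolding abel_continuous_def by blast
  have eq2: "(\<lambda>n. if even n then f a else f b) = (\<lambda>n. f (if even n then a else b))"
    by auto
  have "abel_convergent (\<lambda>n. if even n then f a else f b) (f ((a + b) / 2))"
    by (subst eq2) (rule H)
  then show ?thesis using abel_alt[of "f a" "f b"] abel_unique by blast
qed

lemma halving:
  fixes f :: "real \<Rightarrow> real"
  assumes J: "\<And>a b. f ((a + b) / 2) = (f a + f b) / 2"
  shows "f (l + d / 2 ^ j) = f l + (f (l + d) - f l) / 2 ^ j"
proof (induction j)
  case 0
  then show ?case by simp
next
  case (Suc j)
  have eq: "l + d / 2 ^ Suc j = (l + (l + d / 2 ^ j)) / 2" by (simp add: field_simps)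
  have "f (l + d / 2 ^ Suc j) = (f l + f (l + d / 2 ^ j)) / 2" unfolding eq by (rule J)
  also have "\<dots> = f l + (f (l + d) - f l) / 2 ^ Suc j" using Suc by (simp add: field_simps)
  finally show ?case .
qed

lemma abel_cont:
  assumes f: "abel_continuous f"
  shows "isCont f l"
  unfolding continuous_at_sequentially
proof (intro allI impI)
  have J: "\<And>a b. f ((a + b) / 2) = (f a + f b) / 2" using abel_jensen[OF f] by blast
  fix q :: "nat \<Rightarrow> real" assume q: "q \<longlonglongrightarrow> l"
  show "(f \<circ> q) \<longlonglongrightarrow> f l"
  proof (rule ccontr)
    assume nc: "\<not> (f \<circ> q) \<longlonglongrightarrow> f l"
    then obtain \<epsilon> where \<epsilon>: "\<epsilon> > 0" and fr: "\<And>no. \<exists>n\<ge>no. \<bar>f (q n) - f l\<bar> \<ge> \<epsilon>"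
      unfolding LIMSEQ_iff by (auto simp: not_less)
    define S where "S = {n. \<bar>f (q n) - f l\<bar> \<ge> \<epsilon>}"
    have infS: "infinite S"
      unfolding S_def infinite_nat_iff_unbounded_le using fr by blast
    define \<sigma> where "\<sigma> = enumerate S"
    have \<sigma>: "strict_mono \<sigma>" unfolding \<sigma>_def by (rule strict_mono_enumerate[OF infS])
    have \<sigma>S: "\<bar>f (q (\<sigma> k)) - f l\<bar> \<ge> \<epsilon>" for k
      using enumerate_in_set[OF infS, of k] unfolding \<sigma>_def S_def by simp
    define D where "D k = f (q (\<sigma> k)) - f l" for k
    have exj: "\<exists>j. \<bar>D k\<bar> / 2 ^ j \<le> \<epsilon>" for k
    proof -
      obtain n where "\<bar>D k\<bar> / \<epsilon> < 2 ^ n" using real_arch_pow[of 2 "\<bar>D k\<bar> / \<epsilon>"] by auto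
      then have "\<bar>D k\<bar> / 2 ^ n \<le> \<epsilon>" using \<epsilon> by (simp add: field_simps)
      then show ?thesis by blast
    qed
    define j where "j k = (LEAST j. \<bar>D k\<bar> / 2 ^ j \<le> \<epsilon>)" for k
    have j1: "\<bar>D k\<bar> / 2 ^ j k \<le> \<epsilon>" for k
      unfolding j_def by (rule LeastI_ex[OF exj])
    have j2: "\<bar>D k\<bar> / 2 ^ j k \<ge> \<epsilon> / 2" for k
    proof (cases "j k")
      case 0
      then show ?thesis using \<sigma>S[of k] \<epsilon> by (simp add: D_def)
    next
      case (Suc i)
      have "\<not> \<bar>D k\<bar> / 2 ^ i \<le> \<epsilon>"
        using not_less_Least[of i "\<lambda>j. \<bar>D k\<bar> / 2 ^ j \<le> \<epsilon>"] Suc unfolding j_def by simp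
      then show ?thesis using Suc by (simp add: field_simps)
    qed
    define r where "r k = l + (q (\<sigma> k) - l) / 2 ^ j k" for k
    have fr_eq: "f (r k) - f l = D k / 2 ^ j k" for k
      using halving[OF J, of l "q (\<sigma> k) - l" "j k"] unfolding r_def D_def by simp
    have fr_bd: "\<epsilon> / 2 \<le> \<bar>f (r k) - f l\<bar>" "\<bar>f (r k) - f l\<bar> \<le> \<epsilon>" for k
      using j1[of k] j2[of k] fr_eq[of k] by (simp_all add: abs_divide)
    have q\<sigma>: "(q \<circ> \<sigma>) \<longlonglongrightarrow> l" by (rule LIMSEQ_subseq_LIMSEQ[OF q \<sigma>])
    have "(\<lambda>k. r k - l) \<longlonglongrightarrow> 0"
    proof (rule Lim_null_comparison)
      show "\<forall>\<^sub>F k in sequentially. norm (r k - l) \<le> \<bar>q (\<sigma> k) - l\<bar>"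
      proof (rule always_eventually, rule allI)
        fix k
        have "norm (r k - l) = \<bar>q (\<sigma> k) - l\<bar> / 2 ^ j k" unfolding r_def by (simp add: abs_divide)
        also have "\<dots> \<le> \<bar>q (\<sigma> k) - l\<bar>"
        proof -
          have "1 \<le> (2::real) ^ j k" by simp
          then show ?thesis using mult_left_mono[of 1 "(2::real) ^ j k" "\<bar>q (\<sigma> k) - l\<bar>"] by (simp add: divide_le_eq)
        qed
        finally show "norm (r k - l) \<le> \<bar>q (\<sigma> k) - l\<bar>" .
      qed
      have "(\<lambda>k. \<bar>(q \<circ> \<sigma>) k - l\<bar>) \<longlonglongrightarrow> \<bar>l - l\<bar>" by (intro tendsto_intros q\<sigma>)
      then show "(\<lambda>k. \<bar>q (\<sigma> k) - l\<bar>) \<longlonglongrightarrow> 0" by simp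
    qed
    then have rl: "r \<longlonglongrightarrow> l" using Lim_null[of r l sequentially] by simp
    have "bounded (range (\<lambda>k. f (r k)))"
    proof (rule bounded_subset[OF bounded_closed_interval[of "f l - \<epsilon>" "f l + \<epsilon>"]])
      show "range (\<lambda>k. f (r k)) \<subseteq> {f l - \<epsilon>..f l + \<epsilon>}"
      proof safe
        fix k show "f (r k) \<in> {f l - \<epsilon>..f l + \<epsilon>}" using fr_bd(2)[of k] by (auto simp: abs_le_iff)
      qed
    qed
    then obtain m \<tau> where \<tau>: "strict_mono (\<tau> :: nat \<Rightarrow> nat)" and m: "((\<lambda>k. f (r k)) \<circ> \<tau>) \<longlonglongrightarrow> m"
      using bounded_imp_convergent_subsequence by blast
    have "(\<lambda>k. \<bar>((\<lambda>k. f (r k)) \<circ> \<tau>) k - f l\<bar>) \<longlonglongrightarrow> \<bar>m - f l\<bar>" by (intro tendsto_intros m)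
    then have "\<epsilon> / 2 \<le> \<bar>m - f l\<bar>"
      by (rule LIMSEQ_le_const) (use fr_bd(1) in auto)
    moreover have "m = f l"
    proof -
      have "(r \<circ> \<tau>) \<longlonglongrightarrow> l" by (rule LIMSEQ_subseq_LIMSEQ[OF rl \<tau>])
      then have "abel_convergent (r \<circ> \<tau>) l" by (rule abel_regular)
      then have A1: "abel_convergent (\<lambda>n. f ((r \<circ> \<tau>) n)) (f l)"
        using f unfolding abel_continuous_def by blast
      have A2: "abel_convergent (\<lambda>n. f ((r \<circ> \<tau>) n)) m"
        using abel_regular[OF m] by (simp add: o_def)
      show ?thesis using abel_unique[OF A2 A1] .
    qed
    ultimately show False using \<epsilon> by simp
  qed
qed


lemma jensen_interval_le:
  fixes g :: "real \<Rightarrow> real"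
  assumes J: "\<And>a b. g ((a + b) / 2) = (g a + g b) / 2"
    and c: "\<And>x. isCont g x"
    and ab: "a \<le> b" "g a = 0" "g b = 0"
    and x: "x \<in> {a..b}"
  shows "g x \<le> 0"
proof -
  have "continuous_on {a..b} g" using c by (simp add: continuous_at_imp_continuous_on)
  then obtain c where cab: "c \<in> {a..b}" and cmax: "\<And>y. y \<in> {a..b} \<Longrightarrow> g y \<le> g c"
    using continuous_attains_sup[of "{a..b}" g] ab by auto
  define h where "h = min (c - a) (b - c)"
  have h: "c - h \<in> {a..b}" "c + h \<in> {a..b}" using cab by (auto simp: h_def)
  have e0: "g c = (g (c - h) + g (c + h)) / 2" using J[of "c - h" "c + h"] by simp
  have e1: "g (c - h) \<le> g c" "g (c + h) \<le> g c" using cmax h by auto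
  have e2: "2 * g c = g (c - h) + g (c + h)" using e0 by simp
  have ea: "g (c - h) = g c" using e2 e1 by linarith
  have eb: "g (c + h) = g c" using e2 e1 by linarith
  note e = ea eb
  have "c - h = a \<or> c + h = b" by (auto simp: h_def min_def)
  then have "g c = 0" using e ab by metis
  then show ?thesis using cmax x by auto
qed

lemma jensen_affine:
  fixes f :: "real \<Rightarrow> real"
  assumes J: "\<And>a b. f ((a + b) / 2) = (f a + f b) / 2"
    and c: "\<And>x. isCont f x"
  shows "f x = (f 1 - f 0) * x + f 0"
proof -
  define g where "g y = f y - (f 1 - f 0) * y - f 0" for y
  have Jg: "g ((a + b) / 2) = (g a + g b) / 2" for a b
    unfolding g_def using J[of a b] by (simp add: field_simps)
  have Jg': "g ((a + b) / 2) = (g a + g b) / 2" for a b using Jg .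
  have cg: "isCont g y" for y unfolding g_def by (intro continuous_intros c)
  have cmg: "isCont (\<lambda>y. - g y) y" for y by (intro continuous_intros cg)
  have Jmg: "- g ((a + b) / 2) = (- g a + - g b) / 2" for a b using Jg[of a b] by simp
  have g0: "g 0 = 0" and g1: "g 1 = 0" by (simp_all add: g_def)
  have dbl: "g (2 * t) = 2 * g t" for t using Jg[of 0 "2 * t"] g0 by simp
  have neg: "g (- t) = - g t" for t using Jg[of t "- t"] g0 by simp
  have pw: "g (2 ^ k) = 0" for k
    by (induction k) (simp_all add: g1 dbl)
  obtain k where k: "\<bar>x\<bar> < 2 ^ k" using real_arch_pow[of 2 "\<bar>x\<bar>"] by auto
  have xi: "x \<in> {- (2 ^ k) .. 2 ^ k}" using k by auto
  have lo: "- (2 ^ k) \<le> (2::real) ^ k" by simp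
  have "g x \<le> 0"
    by (rule jensen_interval_le[OF Jg cg lo _ _ xi]) (simp_all add: neg pw)
  moreover have "- g x \<le> 0"
    by (rule jensen_interval_le[of "\<lambda>y. - g y", OF Jmg cmg lo _ _ xi]) (simp_all add: neg pw)
  ultimately have "g x = 0" by simp
  then show ?thesis by (simp add: g_def)
qed

theorem corollary5:
  fixes cG :: "(nat \<Rightarrow> real) set" and G :: "(nat \<Rightarrow> real) \<Rightarrow> real" and f :: "real \<Rightarrow> real"
  assumes "seq_method cG G"
    and "regular_method cG G"
    and "subsequential_method cG G"
    and "abel_continuous f"
  shows "G_continuous cG G f"
proof -
  have J: "\<And>a b. f ((a + b) / 2) = (f a + f b) / 2" using abel_jensen[OF assms(4)] by blast
  have c: "\<And>x. isCont f x" using abel_cont[OF assms(4)] by blast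
  define \<alpha> where "\<alpha> = f 1 - f 0"
  define \<beta> where "\<beta> = f 0"
  have fa: "f x = \<alpha> * x + \<beta>" for x unfolding \<alpha>_def \<beta>_def by (rule jensen_affine[OF J c])
  have const: "(\<lambda>n. \<beta>) \<in> cG" "G (\<lambda>n. \<beta>) = \<beta>"
    using assms(2) unfolding regular_method_def
    by (metis convergent_const limI tendsto_const)+
  show ?thesis unfolding G_continuous_def
  proof
    fix p assume p: "p \<in> cG"
    have ap: "(\<lambda>n. \<alpha> * p n) \<in> cG" "G (\<lambda>n. \<alpha> * p n) = \<alpha> * G p"
      using assms(1) p unfolding seq_method_def by auto
    have eqf: "(\<lambda>n. f (p n)) = (\<lambda>n. (\<lambda>n. \<alpha> * p n) n + (\<lambda>n. \<beta>) n)" by (simp add: fa)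
    have s1: "\<And>p q. p \<in> cG \<Longrightarrow> q \<in> cG \<Longrightarrow> (\<lambda>n. p n + q n) \<in> cG"
      and s2: "\<And>p q. p \<in> cG \<Longrightarrow> q \<in> cG \<Longrightarrow> G (\<lambda>n. p n + q n) = G p + G q"
      using assms(1) unfolding seq_method_def by blast+
    have "(\<lambda>n. (\<lambda>n. \<alpha> * p n) n + (\<lambda>n. \<beta>) n) \<in> cG \<and>
          G (\<lambda>n. (\<lambda>n. \<alpha> * p n) n + (\<lambda>n. \<beta>) n) = G (\<lambda>n. \<alpha> * p n) + G (\<lambda>n. \<beta>)"
      using s1[OF ap(1) const(1)] s2[OF ap(1) const(1)] by simp
    then show "(\<lambda>n. f (p n)) \<in> cG \<and> G (\<lambda>n. f (p n)) = f (G p)"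
      unfolding eqf using ap(2) const(2) by (simp add: fa)
  qed
qed

end
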